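(* Let $X_1,\dots,X_n$ be Polish spaces with Borel probability measures $\mu_i$, let $\mu=\prod_{i=1}^n\mu_i$ on $X=\prod_iX_i$, and let $c:X\to\mathbb{R}$ be Borel measurable with $c\in L^1(X,\mu)$. For $y\in X$ and $\alpha\subseteq\{1,\dots,n\}$ let $c_\alpha(x_\alpha)=c(x_\alpha y_{\{1,\dots,n\}\setminus\alpha})$ on $X_\alpha$. Then there exists $y\in X$ such that for every $\alpha\subseteq\{1,\dots,n\}$ the function $c_\alpha$ is integrable with respect to $\mu_\alpha=\prod_{i\in\alpha}\mu_i$ and $\|c_\alpha\|_{L^1(\mu_\alpha)}\le 2^{n+1}\|c\|_{L^1(\mu)}$ (for $\alpha=\varnothing$ this means $|c(y)|\le2^{n+1}\|c\|_{L^1(\mu)}$).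
   Context: $X_\alpha=\prod_{i\in\alpha}X_i$; for disjoint $\alpha,\beta$, $x_\alpha y_\beta$ denotes the point of $X_{\alpha\sqcup\beta}$ whose coordinates are taken from $x_\alpha$ and $y_\beta$. *)

theory Defs
  imports "HOL-Probability.Probability"
begin

definition Polish_space :: "'a topology \<Rightarrow> bool" where
  "Polish_space X \<longleftrightarrow> completely_metrizable_space X \<and> separable_space X"

definition borel_of :: "'a topology \<Rightarrow> 'a measure" where
  "borel_of X = sigma (topspace X) {U. openin X U}"

end

theory Submission
  imports Defs
begin

context product_prob_space
begin

lemma G_meas:
  assumes N: "finite N" and a: "\<alpha> \<subseteq> N"
    and f[measurable]: "f \<in> borel_measurable (PiM N M)"
  shows "(\<lambda>y. \<integral>\<^sup>+x. f (merge \<alpha> (N-\<alpha>) (x,y)) \<partial>PiM \<alpha> M) \<in> borel_measurable (PiM N M)"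
proof -
  interpret A: product_prob_space M \<alpha> by unfold_locales
  have m[measurable]: "merge \<alpha> (N-\<alpha>) \<in> measurable (PiM \<alpha> M \<Otimes>\<^sub>M PiM (N-\<alpha>) M) (PiM N M)"
    using measurable_merge[of \<alpha> "N-\<alpha>" M] a by (simp add: Un_absorb1)
  have r[measurable]: "(\<lambda>y. restrict y (N-\<alpha>)) \<in> measurable (PiM N M) (PiM (N-\<alpha>) M)"
    by (rule measurable_restrict_subset) auto
  have "(\<lambda>(y,x). f (merge \<alpha> (N-\<alpha>) (x, restrict y (N-\<alpha>)))) \<in> borel_measurable (PiM N M \<Otimes>\<^sub>M PiM \<alpha> M)"
    by measurable
  then have "(\<lambda>y. \<integral>\<^sup>+x. f (merge \<alpha> (N-\<alpha>) (x, restrict y (N-\<alpha>))) \<partial>PiM \<alpha> M) \<in> borel_measurable (PiM N M)"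
    using A.P.borel_measurable_nn_integral_fst by fastforce
  then show ?thesis by simp
qed

lemma key_int:
  assumes N: "finite N" and a: "\<alpha> \<subseteq> N"
    and g[measurable]: "g \<in> borel_measurable (PiM N M)"
  shows "(\<integral>\<^sup>+y. (\<integral>\<^sup>+x. g (merge \<alpha> (N-\<alpha>) (x,y)) \<partial>PiM \<alpha> M) \<partial>PiM N M) = (\<integral>\<^sup>+y. g y \<partial>PiM N M)"
proof -
  interpret A: product_prob_space M \<alpha> by unfold_locales
  define \<beta> where "\<beta> = N - \<alpha>"
  have eq: "N = \<beta> \<union> \<alpha>" using a by (auto simp: \<beta>_def)
  have dj: "\<beta> \<inter> \<alpha> = {}" by (auto simp: \<beta>_def)
  have fa: "finite \<alpha>" "finite \<beta>" using N a finite_subset by (auto simp: \<beta>_def)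
  define G where "G y = (\<integral>\<^sup>+x. g (merge \<alpha> (N-\<alpha>) (x,y)) \<partial>PiM \<alpha> M)" for y
  have Gm: "G \<in> borel_measurable (PiM (\<beta> \<union> \<alpha>) M)"
    unfolding G_def using G_meas[OF N a g] eq by simp
  have gm: "g \<in> borel_measurable (PiM (\<beta> \<union> \<alpha>) M)" using g eq by simp
  have mm: "merge \<alpha> \<beta> (x, merge \<beta> \<alpha> (y, x')) = merge \<alpha> \<beta> (x, y)" for x y x' :: "'i \<Rightarrow> 'a"
    by (auto simp: merge_def fun_eq_iff)
  have GG: "G (merge \<beta> \<alpha> (y, x')) = G y" for y x'
    unfolding G_def \<beta>_def[symmetric] mm ..
  have "(\<integral>\<^sup>+y. G y \<partial>PiM N M) = (\<integral>\<^sup>+y. G y \<partial>PiM (\<beta> \<union> \<alpha>) M)" using eq by simp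
  also have "\<dots> = (\<integral>\<^sup>+ y. (\<integral>\<^sup>+ x'. G (merge \<beta> \<alpha> (y, x')) \<partial>PiM \<alpha> M) \<partial>PiM \<beta> M)"
    by (rule product_nn_integral_fold[OF dj fa(2) fa(1) Gm])
  also have "\<dots> = (\<integral>\<^sup>+ y. G y \<partial>PiM \<beta> M)"
    by (simp add: GG A.P.emeasure_space_1)
  also have "\<dots> = (\<integral>\<^sup>+ y. (\<integral>\<^sup>+ x. g (merge \<beta> \<alpha> (y, x)) \<partial>PiM \<alpha> M) \<partial>PiM \<beta> M)"
    unfolding G_def \<beta>_def[symmetric] by (simp add: merge_commute[OF dj])
  also have "\<dots> = (\<integral>\<^sup>+y. g y \<partial>PiM (\<beta> \<union> \<alpha>) M)"
    by (rule product_nn_integral_fold[OF dj fa(2) fa(1) gm, symmetric])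
  finally show ?thesis using eq G_def by simp
qed

lemma main_aux:
  fixes c :: "('i \<Rightarrow> 'a) \<Rightarrow> real"
  assumes N: "finite N" and c: "integrable (PiM N M) c"
  shows "\<exists>y\<in>space (PiM N M). \<forall>\<alpha>\<subseteq>N. integrable (PiM \<alpha> M) (\<lambda>x. c (merge \<alpha> (N-\<alpha>) (x,y)))
     \<and> (\<integral>x. \<bar>c (merge \<alpha> (N-\<alpha>) (x,y))\<bar> \<partial>PiM \<alpha> M) \<le> 2^card N * (\<integral>x. \<bar>c x\<bar> \<partial>PiM N M)"
proof -
  interpret P: product_prob_space M N by unfold_locales
  have cm[measurable]: "c \<in> borel_measurable (PiM N M)" using c by auto
  define C where "C = (\<integral>x. \<bar>c x\<bar> \<partial>PiM N M)"
  have C0: "C \<ge> 0" unfolding C_def by (rule integral_nonneg_AE) simp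
  define g where "g x = ennreal \<bar>c x\<bar>" for x
  have gm[measurable]: "g \<in> borel_measurable (PiM N M)" unfolding g_def by measurable
  have K: "(\<integral>\<^sup>+x. g x \<partial>PiM N M) = ennreal C"
    unfolding g_def C_def by (rule nn_integral_eq_integral) (auto intro: integrable_abs c)
  define G where "G \<alpha> y = (\<integral>\<^sup>+x. g (merge \<alpha> (N-\<alpha>) (x,y)) \<partial>PiM \<alpha> M)" for \<alpha> y
  have Gm: "\<alpha> \<in> Pow N \<Longrightarrow> G \<alpha> \<in> borel_measurable (PiM N M)" for \<alpha>
    unfolding G_def by (rule G_meas[OF N _ gm]) auto
  have GK: "\<alpha> \<in> Pow N \<Longrightarrow> (\<integral>\<^sup>+y. G \<alpha> y \<partial>PiM N M) = ennreal C" for \<alpha>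
    unfolding G_def using key_int[OF N _ gm, of \<alpha>] K by auto
  define S where "S y = (\<Sum>\<alpha>\<in>Pow N. G \<alpha> y)" for y
  have Sm: "S \<in> borel_measurable (PiM N M)" unfolding S_def using Gm by measurable
  have SI: "(\<integral>\<^sup>+y. S y \<partial>PiM N M) = ennreal (2^card N * C)"
  proof -
    have "(\<integral>\<^sup>+y. S y \<partial>PiM N M) = (\<Sum>\<alpha>\<in>Pow N. (\<integral>\<^sup>+y. G \<alpha> y \<partial>PiM N M))"
      unfolding S_def by (rule nn_integral_sum) (use Gm in auto)
    also have "\<dots> = (\<Sum>\<alpha>\<in>Pow N. ennreal C)" using GK by simp
    also have "\<dots> = of_nat (2^card N) * ennreal C" by (simp add: card_Pow N)
    also have "\<dots> = ennreal (2^card N * C)" using C0 by (simp add: ennreal_mult ennreal_power[symmetric])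
    finally show ?thesis .
  qed
  have "\<exists>y\<in>space (PiM N M). S y \<le> ennreal (2^card N * C)"
  proof (rule ccontr)
    assume "\<not> ?thesis"
    then have lt: "\<forall>y\<in>space (PiM N M). ennreal (2^card N * C) < S y" by (auto simp: not_le)
    have "(\<integral>\<^sup>+y. ennreal (2^card N * C) \<partial>PiM N M) < (\<integral>\<^sup>+y. S y \<partial>PiM N M)"
    proof (rule nn_integral_less)
      show "AE x in PiM N M. ennreal (2^card N * C) \<le> S x" using lt by (auto intro!: AE_I2 less_imp_le)
      show "\<not> (AE x in PiM N M. S x \<le> ennreal (2^card N * C))"
      proof
        assume "AE x in PiM N M. S x \<le> ennreal (2^card N * C)"
        then have "AE x in PiM N M. False"
          by (rule AE_mp) (use lt in \<open>auto intro!: AE_I2 simp: not_le\<close>)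
        then show False by (simp add: AE_False P.P.emeasure_space_1)
      qed
    qed (use Sm in \<open>auto simp: P.P.emeasure_space_1\<close>)
    then show False using SI by (simp add: P.P.emeasure_space_1)
  qed
  then obtain y where y: "y \<in> space (PiM N M)" and Sy: "S y \<le> ennreal (2^card N * C)" by blast
  have "\<forall>\<alpha>\<subseteq>N. integrable (PiM \<alpha> M) (\<lambda>x. c (merge \<alpha> (N-\<alpha>) (x,y)))
     \<and> (\<integral>x. \<bar>c (merge \<alpha> (N-\<alpha>) (x,y))\<bar> \<partial>PiM \<alpha> M) \<le> 2^card N * C"
  proof (intro allI impI)
    fix \<alpha> assume a: "\<alpha> \<subseteq> N"
    define \<beta> where "\<beta> = N - \<alpha>"
    have Gle: "G \<alpha> y \<le> ennreal (2^card N * C)"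
    proof -
      have "G \<alpha> y \<le> S y" unfolding S_def by (rule member_le_sum) (use a N in auto)
      then show ?thesis using Sy by simp
    qed
    have m[measurable]: "merge \<alpha> \<beta> \<in> measurable (PiM \<alpha> M \<Otimes>\<^sub>M PiM \<beta> M) (PiM N M)"
      using measurable_merge[of \<alpha> \<beta> M] a by (simp add: Un_absorb1 \<beta>_def)
    have ry: "restrict y \<beta> \<in> space (PiM \<beta> M)"
      by (rule measurable_space[OF measurable_restrict_subset y]) (auto simp: \<beta>_def)
    have "(\<lambda>x. merge \<alpha> \<beta> (x, restrict y \<beta>)) \<in> measurable (PiM \<alpha> M) (PiM N M)"
      using ry by measurable
    then have mx: "(\<lambda>x. merge \<alpha> \<beta> (x, y)) \<in> measurable (PiM \<alpha> M) (PiM N M)" by simp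
    have hm: "(\<lambda>x. c (merge \<alpha> \<beta> (x,y))) \<in> borel_measurable (PiM \<alpha> M)"
      using measurable_comp[OF mx cm] by (simp add: comp_def)
    have fin: "G \<alpha> y < \<infinity>" using Gle by (metis ennreal_less_top order.strict_trans1 infinity_ennreal_def)
    have int: "integrable (PiM \<alpha> M) (\<lambda>x. c (merge \<alpha> \<beta> (x,y)))"
      by (rule integrableI_bounded[OF hm]) (use fin in \<open>simp add: G_def g_def \<beta>_def\<close>)
    have "(\<integral>x. \<bar>c (merge \<alpha> \<beta> (x,y))\<bar> \<partial>PiM \<alpha> M) = enn2real (G \<alpha> y)"
      unfolding G_def g_def \<beta>_def by (rule integral_eq_nn_integral) (use hm in \<open>auto simp: \<beta>_def\<close>)
    also have "\<dots> \<le> enn2real (ennreal (2^card N * C))"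
      by (rule enn2real_mono[OF Gle]) simp
    also have "\<dots> = 2^card N * C" using C0 by simp
    finally show "integrable (PiM \<alpha> M) (\<lambda>x. c (merge \<alpha> (N-\<alpha>) (x,y)))
     \<and> (\<integral>x. \<bar>c (merge \<alpha> (N-\<alpha>) (x,y))\<bar> \<partial>PiM \<alpha> M) \<le> 2^card N * C"
      using int by (simp add: \<beta>_def)
  qed
  then show ?thesis using y C_def by blast
qed

end

theorem mainTheorem9:
  fixes n :: nat
    and T :: "nat \<Rightarrow> 'a topology"
    and M :: "nat \<Rightarrow> 'a measure"
    and c :: "(nat \<Rightarrow> 'a) \<Rightarrow> real"
  assumes polish: "\<And>i. i \<in> {1..n} \<Longrightarrow> Polish_space (T i)"
    and borel: "\<And>i. i \<in> {1..n} \<Longrightarrow> sets (M i) = sets (borel_of (T i))"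
    and prob: "\<And>i. i \<in> {1..n} \<Longrightarrow> prob_space (M i)"
    and meas: "c \<in> borel_measurable (PiM {1..n} M)"
    and int: "integrable (PiM {1..n} M) c"
  shows "\<exists>y \<in> space (PiM {1..n} M). \<forall>\<alpha> \<subseteq> {1..n}.
           integrable (PiM \<alpha> M) (\<lambda>x. c (merge \<alpha> ({1..n} - \<alpha>) (x, y)))
         \<and> (\<integral>x. \<bar>c (merge \<alpha> ({1..n} - \<alpha>) (x, y))\<bar> \<partial>PiM \<alpha> M)
             \<le> 2 ^ (n + 1) * (\<integral>x. \<bar>c x\<bar> \<partial>PiM {1..n} M)"
proof -
  define I where "I = {1..n}"
  define M' where "M' i = (if i \<in> I then M i else return (count_space UNIV) undefined)" for i
  have pM': "product_prob_space M'"
    by (rule product_prob_spaceI) (auto simp: M'_def I_def prob intro: prob_space_return)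
  have eqP: "\<alpha> \<subseteq> I \<Longrightarrow> PiM \<alpha> M = PiM \<alpha> M'" for \<alpha>
    by (rule PiM_cong) (auto simp: M'_def)
  have int': "integrable (PiM I M') c" using int eqP[of I] by (simp add: I_def)
  obtain y where y: "y \<in> space (PiM I M')" and H: "\<forall>\<alpha>\<subseteq>I. integrable (PiM \<alpha> M') (\<lambda>x. c (merge \<alpha> (I-\<alpha>) (x,y)))
     \<and> (\<integral>x. \<bar>c (merge \<alpha> (I-\<alpha>) (x,y))\<bar> \<partial>PiM \<alpha> M') \<le> 2^card I * (\<integral>x. \<bar>c x\<bar> \<partial>PiM I M')"
    using product_prob_space.main_aux[OF pM' _ int'] by (auto simp: I_def)
  have C0: "0 \<le> (\<integral>x. \<bar>c x\<bar> \<partial>PiM I M')" by (rule integral_nonneg_AE) simp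
  have "(2::real)^card I \<le> 2^(n+1)" by (simp add: I_def)
  then have le: "(2::real)^card I * (\<integral>x. \<bar>c x\<bar> \<partial>PiM I M') \<le> 2^(n+1) * (\<integral>x. \<bar>c x\<bar> \<partial>PiM I M')"
    using C0 by (rule mult_right_mono)
  show ?thesis
  proof (intro bexI[of _ y] allI impI)
    show "y \<in> space (PiM {1..n} M)" using y eqP[of I] by (simp add: I_def)
    fix \<alpha> assume a: "\<alpha> \<subseteq> {1..n}"
    then have a': "\<alpha> \<subseteq> I" by (simp add: I_def)
    show "integrable (PiM \<alpha> M) (\<lambda>x. c (merge \<alpha> ({1..n} - \<alpha>) (x, y))) \<and>
      (\<integral>x. \<bar>c (merge \<alpha> ({1..n} - \<alpha>) (x, y))\<bar> \<partial>PiM \<alpha> M) \<le> 2 ^ (n + 1) * (\<integral>x. \<bar>c x\<bar> \<partial>PiM {1..n} M)"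
      using H[rule_format, OF a'] order_trans[OF _ le] eqP[OF a'] eqP[of I] by (auto simp: I_def)
  qed
qed

end
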